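(* Let $G$ be a graph, let $g:V(G)\to\mathbb N$, and let $v\in V(G)$. Suppose that $(G,g)$ has a removal scheme $\mathcal S=(<,\mathrm{sv})$ in which (i) $v\in\mathrm{sv}(u)$ for every $u\in N(v)$ deleted before $v$, and (ii) $x\notin\mathrm{sv}(v)$ for every $x\in N(v)$ deleted after $v$. Let $H=G-v$ and define $h:V(H)\to\mathbb N$ by $h(u)=g(u)-1$ if $u\in N(v)$ and $h(u)=g(u)$ otherwise. Then $H$ is $h$-removable.
   Context: All graphs are finite and simple. For a graph $G$, a function $f:V(G)\to\mathbb Z$, a vertex $u$ and a subset $W\subseteq N(u)$, the operation $\mathsf{DelSave}(G,f,u,W)$ outputs $G'=G-u$ and $f':V(G')\to\mathbb Z$ with $f'(x)=f(x)-1$ for $x\in N(u)\setminus W$ and $f'(x)=f(x)$ otherwise. This application is legal if $f(u)>\sum_{w\in W}f(w)$ and $f'(x)\ge1$ for all $x\in V(G')$. $G$ is $f$-removable (equivalently $(G,f)$ is removable) if all vertices of $G$ can be deleted by a sequence of legal $\mathsf{DelSave}$ applications, each time replacing $(G,f)$ by the output $(G',f')$; such a sequence is a removal scheme for $(G,f)$. A removal scheme is identified with the pair $(<,\mathrm{sv})$, where $<$ is the linear order in which vertices are deleted and $\mathrm{sv}(u)$ is the set $W$ used in the operation deleting $u$. The empty graph is trivially removable. *)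

theory Defs
  imports Main
begin

text \<open>A finite simple graph is given by a finite vertex set V and a symmetric,
irreflexive adjacency relation E (only its restriction to V matters).
Deleting a vertex u means replacing V by V - {u}.\<close>

definition simple_graph :: "'a set \<Rightarrow> ('a \<Rightarrow> 'a \<Rightarrow> bool) \<Rightarrow> bool" where
  "simple_graph V E \<longleftrightarrow> finite V \<and> (\<forall>x\<in>V. \<forall>y\<in>V. E x y \<longrightarrow> E y x) \<and> (\<forall>x\<in>V. \<not> E x x)"

definition nbhd :: "'a set \<Rightarrow> ('a \<Rightarrow> 'a \<Rightarrow> bool) \<Rightarrow> 'a \<Rightarrow> 'a set" where
  "nbhd V E u = {x \<in> V. E u x}"

definition delsave_fun ::
  "'a set \<Rightarrow> ('a \<Rightarrow> 'a \<Rightarrow> bool) \<Rightarrow> ('a \<Rightarrow> int) \<Rightarrow> 'a \<Rightarrow> 'a set \<Rightarrow> 'a \<Rightarrow> int" where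
  "delsave_fun V E f u W = (\<lambda>x. if x \<in> nbhd V E u - W then f x - 1 else f x)"

definition delsave_legal ::
  "'a set \<Rightarrow> ('a \<Rightarrow> 'a \<Rightarrow> bool) \<Rightarrow> ('a \<Rightarrow> int) \<Rightarrow> 'a \<Rightarrow> 'a set \<Rightarrow> bool" where
  "delsave_legal V E f u W \<longleftrightarrow> u \<in> V \<and> W \<subseteq> nbhd V E u \<and>
     f u > (\<Sum>w\<in>W. f w) \<and> (\<forall>x\<in>V - {u}. delsave_fun V E f u W x \<ge> 1)"

fun removal_scheme ::
  "'a set \<Rightarrow> ('a \<Rightarrow> 'a \<Rightarrow> bool) \<Rightarrow> ('a \<Rightarrow> int) \<Rightarrow> 'a list \<Rightarrow> ('a \<Rightarrow> 'a set) \<Rightarrow> bool" where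
  "removal_scheme V E f [] sv \<longleftrightarrow> V = {}"
| "removal_scheme V E f (u # us) sv \<longleftrightarrow>
     delsave_legal V E f u (sv u) \<and>
     removal_scheme (V - {u}) E (delsave_fun V E f u (sv u)) us sv"

definition removable :: "'a set \<Rightarrow> ('a \<Rightarrow> 'a \<Rightarrow> bool) \<Rightarrow> ('a \<Rightarrow> int) \<Rightarrow> bool" where
  "removable V E f \<longleftrightarrow> (\<exists>ord sv. removal_scheme V E f ord sv)"

end

theory Submission
  imports Defs
begin

lemma rs_set: "removal_scheme V E f us sv \<Longrightarrow> V = set us"
proof (induction us arbitrary: V f)
  case Nil then show ?case by simp
next
  case (Cons u us)
  then have "u \<in> V" "V - {u} = set us" by (auto simp: delsave_legal_def)
  then show ?case by auto
qed

lemma rs_eqV: "removal_scheme A E f us sv \<Longrightarrow> A = B \<Longrightarrow> removal_scheme B E f us sv"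
  by simp

lemma rs_cong:
  "removal_scheme V E f us sv \<Longrightarrow> (\<forall>x\<in>V. f' x = f x) \<Longrightarrow> v \<notin> V
   \<Longrightarrow> removal_scheme V E f' us (\<lambda>u. sv u - {v})"
proof (induction us arbitrary: V f f')
  case Nil then show ?case by simp
next
  case (Cons u us)
  let ?f1 = "delsave_fun V E f u (sv u)"
  let ?f1' = "delsave_fun V E f' u (sv u - {v})"
  have L: "delsave_legal V E f u (sv u)" and R: "removal_scheme (V - {u}) E ?f1 us sv"
    using Cons.prems by auto
  have sub: "sv u \<subseteq> nbhd V E u" using L by (simp add: delsave_legal_def)
  have nb: "nbhd V E u \<subseteq> V" by (auto simp: nbhd_def)
  have e: "sv u - {v} = sv u" using sub nb Cons.prems(3) by blast
  have sumeq: "(\<Sum>w\<in>sv u. f' w) = (\<Sum>w\<in>sv u. f w)"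
    using sub nb Cons.prems(2) by (intro sum.cong) auto
  have agree: "\<forall>x\<in>V. ?f1' x = ?f1 x"
    using Cons.prems(2) e by (simp add: delsave_fun_def)
  have "delsave_legal V E f' u (sv u - {v})"
    using L e sumeq agree Cons.prems(2) by (auto simp: delsave_legal_def)
  moreover have "removal_scheme (V - {u}) E ?f1' us (\<lambda>u. sv u - {v})"
    using Cons.IH[OF R] agree Cons.prems(3) by auto
  ultimately show ?case by simp
qed

lemma rs_cong2:
  "removal_scheme V E f us sv \<Longrightarrow> (\<forall>x\<in>V. f' x = f x)
   \<Longrightarrow> removal_scheme V E f' us sv"
proof (induction us arbitrary: V f f')
  case Nil then show ?case by simp
next
  case (Cons u us)
  let ?f1 = "delsave_fun V E f u (sv u)"
  let ?f1' = "delsave_fun V E f' u (sv u)"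
  have L: "delsave_legal V E f u (sv u)" and R: "removal_scheme (V - {u}) E ?f1 us sv"
    using Cons.prems by auto
  have sub: "sv u \<subseteq> nbhd V E u" using L by (simp add: delsave_legal_def)
  have nb: "nbhd V E u \<subseteq> V" by (auto simp: nbhd_def)
  have sumeq: "(\<Sum>w\<in>sv u. f' w) = (\<Sum>w\<in>sv u. f w)"
    using sub nb Cons.prems(2) by (intro sum.cong) auto
  have agree: "\<forall>x\<in>V. ?f1' x = ?f1 x"
    using Cons.prems(2) by (simp add: delsave_fun_def)
  have "delsave_legal V E f' u (sv u)"
    using L sumeq agree Cons.prems(2) by (auto simp: delsave_legal_def)
  moreover have "removal_scheme (V - {u}) E ?f1' us sv"
    using Cons.IH[OF R] agree by auto
  ultimately show ?case by simp
qed

lemma ge2: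
  "removal_scheme V E f (xs @ v # ys) sv \<Longrightarrow> \<forall>w\<in>V. f w \<ge> 1 \<Longrightarrow> x \<in> V \<Longrightarrow> x \<noteq> v
   \<Longrightarrow> E v x \<Longrightarrow> (x \<in> set xs \<longrightarrow> v \<in> sv x) \<Longrightarrow> (x \<in> set ys \<longrightarrow> x \<notin> sv v)
   \<Longrightarrow> f x \<ge> 2"
proof (induction xs arbitrary: V f)
  case Nil
  have L: "delsave_legal V E f v (sv v)" using Nil.prems(1) by simp
  have "V = set (v # ys)" using rs_set[OF Nil.prems(1)] by simp
  then have "x \<in> set ys" using Nil.prems by auto
  then have "x \<notin> sv v" using Nil.prems by auto
  moreover have "x \<in> nbhd V E v" using Nil.prems by (simp add: nbhd_def)
  ultimately have "delsave_fun V E f v (sv v) x = f x - 1" by (simp add: delsave_fun_def)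
  moreover have "delsave_fun V E f v (sv v) x \<ge> 1" using L Nil.prems
    by (auto simp: delsave_legal_def)
  ultimately show ?case by simp
next
  case (Cons u xs')
  let ?f1 = "delsave_fun V E f u (sv u)"
  have L: "delsave_legal V E f u (sv u)" and R: "removal_scheme (V - {u}) E ?f1 (xs' @ v # ys) sv"
    using Cons.prems by auto
  have fin: "finite V" using rs_set[OF Cons.prems(1)] by simp
  show ?case
  proof (cases "u = x")
    case True
    then have vin: "v \<in> sv x" using Cons.prems by simp
    have sub: "sv x \<subseteq> V" using L True by (auto simp: delsave_legal_def nbhd_def)
    have nn1: "\<forall>w\<in>sv x. 1 \<le> f w" using sub Cons.prems(2) by blast
    have nn: "\<forall>w\<in>sv x. 0 \<le> f w"
    proof
      fix w assume "w \<in> sv x" then have "1 \<le> f w" using nn1 by blast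
      then show "0 \<le> f w" by simp
    qed
    have "f v \<le> (\<Sum>w\<in>sv x. f w)"
      by (rule member_le_sum[OF vin]) (use nn finite_subset[OF sub fin] in auto)
    moreover have "f x > (\<Sum>w\<in>sv x. f w)" using L True by (simp add: delsave_legal_def)
    moreover have "f v \<ge> 1" using Cons.prems(2) sub vin by auto
    ultimately show ?thesis by simp
  next
    case False
    have pos: "\<forall>w\<in>V - {u}. ?f1 w \<ge> 1" using L by (simp add: delsave_legal_def)
    have "?f1 x \<ge> 2"
      using Cons.IH[OF R pos] Cons.prems False by auto
    moreover have "?f1 x \<le> f x" by (simp add: delsave_fun_def)
    ultimately show ?thesis by simp
  qed
qed

lemma main:
  "removal_scheme V E f (xs @ v # ys) sv \<Longrightarrow> v \<in> V
   \<Longrightarrow> \<forall>u\<in>set xs. u \<in> N \<longrightarrow> v \<in> sv u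
   \<Longrightarrow> \<forall>x\<in>set ys. x \<in> N \<longrightarrow> x \<notin> sv v
   \<Longrightarrow> N \<inter> V = nbhd V E v
   \<Longrightarrow> removal_scheme (V - {v}) E (\<lambda>x. if x \<in> N then f x - 1 else f x) (xs @ ys) (\<lambda>u. sv u - {v})"
proof (induction xs arbitrary: V f)
  case Nil
  let ?f1 = "delsave_fun V E f v (sv v)"
  have R: "removal_scheme (V - {v}) E ?f1 ys sv" using Nil.prems(1) by simp
  have VV: "V = set (v # ys)" using rs_set[OF Nil.prems(1)] by simp
  have "\<forall>x\<in>V - {v}. (if x \<in> N then f x - 1 else f x) = ?f1 x"
  proof
    fix x assume x: "x \<in> V - {v}"
    then have xy: "x \<in> set ys" using VV by auto
    show "(if x \<in> N then f x - 1 else f x) = ?f1 x"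
      using Nil.prems(4,5) x xy by (auto simp: delsave_fun_def)
  qed
  then show ?case using rs_cong[OF R] by simp
next
  case (Cons u xs')
  let ?f1 = "delsave_fun V E f u (sv u)"
  let ?h = "\<lambda>x. if x \<in> N then f x - 1 else f x"
  let ?h1 = "\<lambda>x. if x \<in> N then ?f1 x - 1 else ?f1 x"
  let ?sv' = "\<lambda>u. sv u - {v}"
  have L: "delsave_legal V E f u (sv u)" and R: "removal_scheme (V - {u}) E ?f1 (xs' @ v # ys) sv"
    using Cons.prems by auto
  have fin: "finite V" using rs_set[OF Cons.prems(1)] by simp
  have VV: "V = set (u # xs' @ v # ys)" using rs_set[OF Cons.prems(1)] by simp
  have uv: "u \<noteq> v" using R rs_set[OF R] by auto
  have vV1: "v \<in> V - {u}" using uv Cons.prems(2) by simp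
  have N1: "N \<inter> (V - {u}) = nbhd (V - {u}) E v" using Cons.prems(5) by (auto simp: nbhd_def)
  have IH: "removal_scheme (V - {u} - {v}) E ?h1 (xs' @ ys) ?sv'"
    using Cons.IH[OF R vV1 _ Cons.prems(4) N1] Cons.prems(3) by simp
  have pos: "\<forall>w\<in>V - {u}. ?f1 w \<ge> 1" using L by (simp add: delsave_legal_def)
  have sub: "sv u \<subseteq> nbhd V E u" using L by (simp add: delsave_legal_def)
  have subV: "sv u \<subseteq> V" using sub by (auto simp: nbhd_def)
  have finsv: "finite (sv u)" using subV fin by (rule finite_subset)
  have agree: "\<forall>x\<in>V - {v} - {u}. delsave_fun (V - {v}) E ?h u (sv u - {v}) x = ?h1 x"
    by (auto simp: delsave_fun_def nbhd_def)
  have R2: "removal_scheme (V - {v} - {u}) E (delsave_fun (V - {v}) E ?h u (sv u - {v})) (xs' @ ys) ?sv'"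
    proof -
    have e: "V - {u} - {v} = V - {v} - {u}" by blast
    have IH2: "removal_scheme (V - {v} - {u}) E ?h1 (xs' @ ys) ?sv'"
      by (rule rs_eqV[OF IH e])
    show ?thesis using rs_cong2[OF IH2 agree] .
  qed
  have sumh: "(\<Sum>w\<in>sv u - {v}. ?h w) \<le> (\<Sum>w\<in>sv u - {v}. f w)"
    by (intro sum_mono) auto
  have fu: "f u > (\<Sum>w\<in>sv u. f w)" using L by (simp add: delsave_legal_def)
  have hu: "?h u > (\<Sum>w\<in>sv u - {v}. ?h w)"
  proof (cases "v \<in> sv u")
    case True
    have "?f1 v = f v" using True by (simp add: delsave_fun_def)
    moreover have "?f1 v \<ge> 1" using pos vV1 by blast
    ultimately have fv: "f v \<ge> 1" by simp
    have "(\<Sum>w\<in>sv u. f w) = f v + (\<Sum>w\<in>sv u - {v}. f w)"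
      using True finsv by (simp add: sum.remove)
    then show ?thesis using fu fv sumh by auto
  next
    case False
    then have e: "sv u - {v} = sv u" by simp
    have "u \<notin> N" using False Cons.prems(3) by auto
    then have "?h u = f u" by simp
    moreover have "sum f (sv u - {v}) = sum f (sv u)" using e by simp
    ultimately show ?thesis using fu sumh by linarith
  qed
  have post: "\<forall>x\<in>V - {v} - {u}. delsave_fun (V - {v}) E ?h u (sv u - {v}) x \<ge> 1"
  proof
    fix x assume x: "x \<in> V - {v} - {u}"
    have ag: "delsave_fun (V - {v}) E ?h u (sv u - {v}) x = ?h1 x" using agree x by blast
    have x1: "x \<in> V - {u}" using x by blast
    have p1: "?f1 x \<ge> 1" using pos x1 by blast
    show "delsave_fun (V - {v}) E ?h u (sv u - {v}) x \<ge> 1"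
    proof (cases "x \<in> N")
      case False
      then show ?thesis using ag p1 by simp
    next
      case True
      have Evx: "E v x" using True x Cons.prems(5) by (auto simp: nbhd_def)
      have xv: "x \<noteq> v" using x by blast
      have c1: "x \<in> set xs' \<longrightarrow> v \<in> sv x" using True Cons.prems(3) by simp
      have c2: "x \<in> set ys \<longrightarrow> x \<notin> sv v" using True Cons.prems(4) by simp
      have "?f1 x \<ge> 2"
        using ge2[OF R pos x1 xv Evx c1 c2] .
      then show ?thesis using ag True by simp
    qed
  qed
  have "delsave_legal (V - {v}) E ?h u (sv u - {v})"
    unfolding delsave_legal_def
  proof (intro conjI)
    show "u \<in> V - {v}" using VV uv by simp
    show "sv u - {v} \<subseteq> nbhd (V - {v}) E u" using sub by (auto simp: nbhd_def)
  qed (use hu post in auto)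
  then show ?case using R2 by (simp only: append_Cons removal_scheme.simps(2))
qed

theorem lemma3p2:
  fixes V :: "'a set" and E :: "'a \<Rightarrow> 'a \<Rightarrow> bool" and g :: "'a \<Rightarrow> int"
    and v :: 'a and xs ys :: "'a list" and sv :: "'a \<Rightarrow> 'a set"
  assumes "simple_graph V E"
    and "\<forall>x\<in>V. g x \<ge> 0"
    and "v \<in> V"
    and "removal_scheme V E g (xs @ v # ys) sv"
    and "\<forall>u\<in>set xs. u \<in> nbhd V E v \<longrightarrow> v \<in> sv u"
    and "\<forall>x\<in>set ys. x \<in> nbhd V E v \<longrightarrow> x \<notin> sv v"
  shows "removable (V - {v}) E (\<lambda>u. if u \<in> nbhd V E v then g u - 1 else g u)"
  unfolding removable_def
  using main[OF assms(4,3,5,6)] by (auto simp: nbhd_def)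

end
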